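(* Let $\mathcal{P}$ be a probability distribution on $\mathbb{R}$ and let $X$ be a random variable with distribution $\mathcal{P}$. Define $g(p) := \inf\{r \in \mathbb{R} : \mathbb{P}(X \geq r) \leq p\}$ for $0<p<1$. Assume that $\mathbb{E}|X| < \infty$, that $g(p) \to \infty$ as $p \to 0^+$, and that $g$ is slowly varying at zero, i.e. $g(\lambda p)/g(p) \to 1$ as $p \to 0^+$ for every fixed $\lambda > 0$. For $n\in\mathbb{N}$ let $M_n = \max_{1\le i\le n} X_i$, where $X_1,\dots,X_n$ are i.i.d. with distribution $\mathcal{P}$. Then $$\mathbb{E} M_n \geq g(1/n)(1+o(1)) \quad \text{as } n\to\infty.$$ *)

theory Defs
  imports "HOL-Probability.Probability"
begin

definition upper_quantile :: "real measure \<Rightarrow> real \<Rightarrow> real" where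
  "upper_quantile P p = Inf {r. measure P {x \<in> space P. r \<le> x} \<le> p}"

definition expected_max :: "real measure \<Rightarrow> nat \<Rightarrow> real" where
  "expected_max P n =
     integral\<^sup>L (PiM {1..n} (\<lambda>_. P)) (\<lambda>x. Max ((\<lambda>i. x i) ` {1..n}))"

end

theory Submission
  imports Defs
begin


lemma quant_gt:
  fixes P :: "real measure"
  assumes P: "prob_space P" and sb: "sets P = sets borel" and q: "0 < q" "q < 1"
    and t: "t < upper_quantile P q"
  shows "q < measure P {x. t \<le> x}"
proof -
  interpret prob_space P by fact
  have sp: "space P = UNIV" using sets_eq_imp_space_eq[OF sb] by simp
  define S where "S = {r. measure P {x \<in> space P. r \<le> x} \<le> q}"
  have bdd: "bdd_below S"
  proof (rule ccontr)
    assume nb: "\<not> bdd_below S"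
    have le: "measure P {x. - real k \<le> x} \<le> q" for k
    proof -
      from nb obtain r where r: "r \<in> S" "r < - real k"
        unfolding bdd_below_def by (meson not_le)
      have "measure P {x. - real k \<le> x} \<le> measure P {x. r \<le> x}"
        by (rule finite_measure_mono) (use r sb sp in \<open>auto\<close>)
      also have "\<dots> \<le> q" using r sp by (simp add: S_def)
      finally show ?thesis .
    qed
    have "(\<lambda>k. measure P {x. - real k \<le> x}) \<longlonglongrightarrow> measure P (\<Union>k. {x. - real k \<le> x})"
      by (rule finite_Lim_measure_incseq) (auto simp: sb incseq_def)
    moreover have "(\<Union>k. {x::real. - real k \<le> x}) = UNIV"
    proof safe
      fix x :: real
      obtain k where "-x \<le> real k" using real_arch_simple by blast
      then show "x \<in> (\<Union>k. {x. - real k \<le> x})" by (auto intro!: exI[of _ k])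
    qed auto
    ultimately have "(\<lambda>k. measure P {x. - real k \<le> x}) \<longlonglongrightarrow> 1"
      using prob_space sp by simp
    then have "1 \<le> q" using le by (intro LIMSEQ_le_const2) auto
    with q show False by simp
  qed
  show ?thesis
  proof (rule ccontr)
    assume "\<not> ?thesis"
    then have "t \<in> S" using sp by (simp add: S_def)
    then have "Inf S \<le> t" using bdd by (rule cInf_lower)
    with t show False by (simp add: upper_quantile_def S_def)
  qed
qed



lemma core:
  fixes P :: "real measure"
  assumes P: "prob_space P" and sb: "sets P = sets borel" and int: "integrable P (\<lambda>x. x)"
    and n: "n \<ge> 1" and t: "0 < t"
  shows "t * (1 - (1 - measure P {x. t \<le> x}) ^ n) - (\<integral>x. \<bar>x\<bar> \<partial>P) \<le> expected_max P n"
proof -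
  interpret prob_space P by fact
  have sp: "space P = UNIV" using sets_eq_imp_space_eq[OF sb] by simp
  define I where "I = {1..n}"
  define Q where "Q = PiM I (\<lambda>_. P)"
  have fin: "finite I" and iI: "1 \<in> I" using n by (auto simp: I_def)
  interpret F: finite_product_prob_space "\<lambda>_. P" I
    using fin by unfold_locales auto
  have Qprob: "prob_space Q" unfolding Q_def by (rule prob_space_PiM) (rule P)
  interpret Q: prob_space Q by (rule Qprob)
  have spQ: "space Q = PiE I (\<lambda>_. UNIV)" unfolding Q_def by (simp add: space_PiM sp)
  have meas_comp[measurable]: "(\<lambda>x. x i) \<in> borel_measurable Q" if "i \<in> I" for i
    unfolding Q_def using that
    by (metis measurable_component_singleton measurable_cong_sets sb)
  have distr: "distr Q P (\<lambda>x. x 1) = P"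
    unfolding Q_def by (rule distr_PiM_component) (use P iI in auto)
  have mc1: "(\<lambda>x. x 1) \<in> measurable Q P"
    unfolding Q_def using iI by (rule measurable_component_singleton)
  have intc: "integrable Q (\<lambda>x. x i)" if "i \<in> I" for i
  proof -
    have "distr Q P (\<lambda>x. x i) = P"
      unfolding Q_def by (rule distr_PiM_component) (use P that in auto)
    moreover have "(\<lambda>x. x i) \<in> measurable Q P"
      unfolding Q_def using that by (rule measurable_component_singleton)
    ultimately show ?thesis using int integrable_distr_eq[of "\<lambda>x. x i" Q P "\<lambda>x. x"]
      by (simp add: sb)
  qed
  have absint: "(\<integral>x. \<bar>x 1\<bar> \<partial>Q) = (\<integral>x. \<bar>x\<bar> \<partial>P)"
    using integral_distr[OF mc1, of "\<lambda>x. \<bar>x\<bar>"] distr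
    by (simp add: measurable_cong_sets[OF sb refl])
  define Mx where "Mx = (\<lambda>x::nat \<Rightarrow> real. Max ((\<lambda>i. x i) ` I))"
  have Mmeas[measurable]: "Mx \<in> borel_measurable Q"
    unfolding Mx_def using fin by (intro borel_measurable_Max) auto
  have Mint: "integrable Q Mx"
  proof (rule Bochner_Integration.integrable_bound[where f = "\<lambda>x. \<Sum>i\<in>I. \<bar>x i\<bar>"])
    show "integrable Q (\<lambda>x. \<Sum>i\<in>I. \<bar>x i\<bar>)"
      using intc by (intro Bochner_Integration.integrable_sum Bochner_Integration.integrable_abs) auto
    show "AE x in Q. norm (Mx x) \<le> norm (\<Sum>i\<in>I. \<bar>x i\<bar>)"
    proof (rule AE_I2)
      fix x :: "nat \<Rightarrow> real"
      have ne: "(\<lambda>i. x i) ` I \<noteq> {}" using iI by auto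
      obtain j where j: "j \<in> I" "Mx x = x j"
        using Max_in[OF finite_imageI[OF fin] ne] unfolding Mx_def by auto
      have "\<bar>x j\<bar> \<le> (\<Sum>i\<in>I. \<bar>x i\<bar>)"
        using j fin by (intro member_le_sum) auto
      then show "norm (Mx x) \<le> norm (\<Sum>i\<in>I. \<bar>x i\<bar>)" using j by simp
    qed
  qed simp
  define E where "E = {x \<in> space Q. t \<le> Mx x}"
  have Esets: "E \<in> sets Q" unfolding E_def by measurable
  have pw: "t * indicator E x - \<bar>x 1\<bar> \<le> Mx x" if "x \<in> space Q" for x
  proof -
    have "x 1 \<le> Mx x" unfolding Mx_def using fin iI by (intro Max_ge) auto
    then show ?thesis using that t by (auto simp: E_def indicator_def)
  qed
  have "(\<integral>x. t * indicator E x - \<bar>x 1\<bar> \<partial>Q) \<le> (\<integral>x. Mx x \<partial>Q)"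
    using pw Mint intc[OF iI] Esets Qprob
    by (intro integral_mono) (auto intro!: Bochner_Integration.integrable_diff integrable_mult_right
        integrable_real_indicator Bochner_Integration.integrable_abs simp: less_top[symmetric])
  also have "(\<integral>x. t * indicator E x - \<bar>x 1\<bar> \<partial>Q) = t * measure Q E - (\<integral>x. \<bar>x\<bar> \<partial>P)"
  proof -
    have iE: "integrable Q (\<lambda>x. t * indicator E x :: real)"
      using Esets by (auto intro!: integrable_mult_right integrable_real_indicator simp: less_top[symmetric])
    have "(\<integral>x. t * indicator E x - \<bar>x 1\<bar> \<partial>Q) = (\<integral>x. t * indicator E x \<partial>Q) - (\<integral>x. \<bar>x 1\<bar> \<partial>Q)"
      using iE intc[OF iI] by (intro Bochner_Integration.integral_diff Bochner_Integration.integrable_abs)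
    moreover have "E \<inter> space Q = E" using Esets sets.sets_into_space by blast
    ultimately show ?thesis using absint by simp
  qed
  also have "(\<integral>x. Mx x \<partial>Q) = expected_max P n"
    by (simp add: expected_max_def Q_def Mx_def I_def)
  finally have main: "t * measure Q E - (\<integral>x. \<bar>x\<bar> \<partial>P) \<le> expected_max P n" .
  have "space Q - E = PiE I (\<lambda>_. {x. x < t})"
  proof -
    have "Mx x < t \<longleftrightarrow> (\<forall>i\<in>I. x i < t)" for x
      unfolding Mx_def using fin iI by (subst Max_less_iff) auto
    then show ?thesis unfolding E_def spQ by (auto simp: PiE_iff) (meson not_le)+
  qed
  then have "measure Q (space Q - E) = (\<Prod>i\<in>I. measure P {x. x < t})"
    using F.prob_times[of "\<lambda>_. {x. x < t}"] by (simp add: Q_def sb)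
  also have "\<dots> = (1 - measure P {x. t \<le> x}) ^ n"
  proof -
    have "measure P {x. x < t} = 1 - measure P {x. t \<le> x}"
    proof -
      have "{x. t \<le> x} \<in> sets P" by (simp add: sb)
      from prob_compl[OF this] have "prob (space P - {x. t \<le> x}) = 1 - prob {x. t \<le> x}" .
      moreover have "space P - {x. t \<le> x} = {x. x < t}" using sp by auto
      ultimately show ?thesis by simp
    qed
    then show ?thesis by (simp add: I_def)
  qed
  finally have "measure Q E = 1 - (1 - measure P {x. t \<le> x}) ^ n"
    using prob_space.prob_compl[OF Qprob Esets] by simp
  with main show ?thesis by simp
qed



lemma liminf_part:
  fixes P :: "real measure"
  assumes P: "prob_space P" and sb: "sets P = sets borel" and int: "integrable P (\<lambda>x. x)"
    and top: "filterlim (upper_quantile P) at_top (at_right 0)"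
    and sv: "\<And>c::real. c > 0 \<Longrightarrow>
           ((\<lambda>p. upper_quantile P (c * p) / upper_quantile P p) \<longlongrightarrow> 1) (at_right 0)"
    and eps: "0 < \<epsilon>"
  shows "\<forall>\<^sub>F n in sequentially. (1 - \<epsilon>) * upper_quantile P (1 / real n) \<le> expected_max P n"
proof -
  define L where "L = \<bar>ln (2 / \<epsilon>)\<bar> + 1"
  have L0: "L > 0" by (simp add: L_def)
  have "exp (- L) \<le> exp (- ln (2/\<epsilon>) - 1)" unfolding L_def by simp
  also have "\<dots> = (\<epsilon>/2) / exp 1" using eps by (simp add: exp_diff exp_minus)
  also have "\<dots> < \<epsilon>/2" using eps by (simp add: divide_less_eq)
  finally have eL: "exp (- L) < \<epsilon>/2" .
  define a where "a = 1 - exp (- L)"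
  define C where "C = (\<integral>x. \<bar>x\<bar> \<partial>P)"
  define G where "G = (\<lambda>n::nat. upper_quantile P (1 / real n))"
  define H where "H = (\<lambda>n::nat. upper_quantile P (L * (1 / real n)))"
  have inv: "filterlim (\<lambda>n::nat. 1 / real n) (at_right 0) sequentially"
    using filterlim_compose[OF filterlim_inverse_at_right_top filterlim_real_sequentially]
    by (simp add: inverse_eq_divide)
  have invL: "filterlim (\<lambda>n::nat. L * (1 / real n)) (at_right 0) sequentially"
  proof (rule tendsto_imp_filterlim_at_right)
    show "(\<lambda>n::nat. L * (1 / real n)) \<longlonglongrightarrow> 0"
      using tendsto_mult_right[OF lim_1_over_n, of L] by simp
    show "\<forall>\<^sub>F n in sequentially. 0 < L * (1 / real n)"
      using eventually_gt_at_top[of "0::nat"] by eventually_elim (use L0 in auto)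
  qed
  have Gtop: "filterlim G at_top sequentially"
    unfolding G_def by (rule filterlim_compose[OF top inv])
  have Htop: "filterlim H at_top sequentially"
    unfolding H_def by (rule filterlim_compose[OF top invL])
  have ratio: "(\<lambda>n. H n / G n) \<longlonglongrightarrow> 1"
    unfolding H_def G_def by (rule filterlim_compose[OF sv[OF L0] inv])
  have Ginv: "(\<lambda>n. inverse (G n)) \<longlonglongrightarrow> 0"
    by (rule tendsto_inverse_0_at_top[OF Gtop])
  define R where "R = (\<lambda>n. (H n / G n) * a - (a + C) * inverse (G n))"
  have "R \<longlonglongrightarrow> 1 * a - (a + C) * 0"
    unfolding R_def by (intro tendsto_intros ratio Ginv)
  then have "\<forall>\<^sub>F n in sequentially. a - \<epsilon>/2 < R n"
    using eps by (intro order_tendstoD) auto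
  moreover have "\<forall>\<^sub>F n in sequentially. 0 < G n"
    using Gtop by (simp add: filterlim_at_top_dense)
  moreover have "\<forall>\<^sub>F n in sequentially. 1 < H n"
    using Htop by (simp add: filterlim_at_top_dense)
  moreover have "\<forall>\<^sub>F n in sequentially. L < real n \<and> 1 \<le> n"
    using eventually_ge_at_top[of "nat \<lceil>L\<rceil> + 1"]
  proof eventually_elim
    case (elim n)
    then have "real n \<ge> real (nat \<lceil>L\<rceil>) + 1" by linarith
    moreover have "real (nat \<lceil>L\<rceil>) \<ge> L" by linarith
    ultimately show ?case using elim by auto
  qed
  ultimately show ?thesis
  proof eventually_elim
    case (elim n)
    define q where "q = L * (1 / real n)"
    have q0: "0 < q" "q < 1" using elim L0 by (auto simp: q_def field_simps)
    define t where "t = H n - 1"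
    have tq: "t < upper_quantile P q" by (simp add: t_def H_def q_def)
    define p where "p = measure P {x. t \<le> x}"
    have qp: "q < p" unfolding p_def by (rule quant_gt[OF P sb q0 tq])
    have t0: "0 < t" using elim by (simp add: t_def)
    have core': "t * (1 - (1 - p) ^ n) - C \<le> expected_max P n"
      unfolding p_def C_def using core[OF P sb int _ t0] elim by simp
    have p1: "p \<le> 1" unfolding p_def using prob_space.prob_le_1[OF P] by simp
    have "(1 - p) ^ n \<le> (1 - q) ^ n" using p1 qp by (intro power_mono) auto
    also have "\<dots> \<le> (exp (- q)) ^ n"
      using q0 by (intro power_mono) (auto simp: exp_ge_add_one_self[of "-q", simplified])
    also have "\<dots> = exp (real n * (- q))" by (rule exp_of_nat_mult[symmetric])
    also have "real n * (- q) = - L" using elim by (simp add: q_def)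
    finally have "(1 - p) ^ n \<le> exp (- L)" .
    then have "t * a \<le> t * (1 - (1 - p) ^ n)" using t0 by (intro mult_left_mono) (auto simp: a_def)
    with core' have E1: "t * a - C \<le> expected_max P n" by linarith
    have "R n = (t * a - C) / G n"
      using elim by (simp add: R_def t_def field_simps)
    also have "\<dots> \<le> expected_max P n / G n"
      using E1 elim by (intro divide_right_mono) auto
    finally have "a - \<epsilon>/2 < expected_max P n / G n" using elim by linarith
    then have "1 - \<epsilon> < expected_max P n / G n" using eL by (simp add: a_def)
    then show ?case using elim by (simp add: G_def field_simps)
  qed
qed



theorem proposition2:
  fixes P :: "real measure"
  assumes "prob_space P"
    and "sets P = sets borel"
    and "integrable P (\<lambda>x. x)"
    and "filterlim (upper_quantile P) at_top (at_right 0)"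
    and "\<And>c::real. c > 0 \<Longrightarrow>
           ((\<lambda>p. upper_quantile P (c * p) / upper_quantile P p) \<longlongrightarrow> 1) (at_right 0)"
  shows "\<exists>h :: nat \<Rightarrow> real. h \<longlonglongrightarrow> 0 \<and>
           (\<forall>\<^sub>F n in sequentially.
              expected_max P n \<ge> upper_quantile P (1 / real n) * (1 + h n))"
proof -
  define G where "G = (\<lambda>n::nat. upper_quantile P (1 / real n))"
  define h where "h = (\<lambda>n. min 0 (expected_max P n / G n - 1))"
  have inv: "filterlim (\<lambda>n::nat. 1 / real n) (at_right 0) sequentially"
    using filterlim_compose[OF filterlim_inverse_at_right_top filterlim_real_sequentially]
    by (simp add: inverse_eq_divide)
  have Gtop: "filterlim G at_top sequentially"
    unfolding G_def by (rule filterlim_compose[OF assms(4) inv])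
  have Gpos: "\<forall>\<^sub>F n in sequentially. 0 < G n"
    using Gtop by (simp add: filterlim_at_top_dense)
  have lp: "\<forall>\<^sub>F n in sequentially. (1 - e) * G n \<le> expected_max P n" if "0 < e" for e
    unfolding G_def by (rule liminf_part[OF assms that])
  have "h \<longlonglongrightarrow> 0"
  proof (rule order_tendstoI)
    fix b :: real assume "b < 0"
    then have "0 < - b / 2" by simp
    from lp[OF this] Gpos show "\<forall>\<^sub>F n in sequentially. b < h n"
    proof eventually_elim
      case (elim n)
      then have "1 + b/2 \<le> expected_max P n / G n" by (simp add: field_simps)
      then show ?case using \<open>b < 0\<close> by (simp add: h_def)
    qed
  next
    fix b :: real assume "0 < b"
    then show "\<forall>\<^sub>F n in sequentially. h n < b" by (intro always_eventually) (auto simp: h_def min_less_iff_disj)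
  qed
  moreover have "\<forall>\<^sub>F n in sequentially. expected_max P n \<ge> upper_quantile P (1 / real n) * (1 + h n)"
    using Gpos
  proof eventually_elim
    case (elim n)
    have "1 + h n \<le> expected_max P n / G n" by (simp add: h_def)
    then have "G n * (1 + h n) \<le> G n * (expected_max P n / G n)"
      using elim by (intro mult_left_mono) auto
    then show ?case using elim by (simp add: G_def)
  qed
  ultimately show ?thesis by blast
qed


end
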